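(* Consider the following permutation model $\mathcal V$ (in $\mathsf{ZFA}$ with choice in the ground). Let $A_0$ be an arbitrary infinite set and $G_0$ the group of all permutations of $A_0$. Recursively, let $A_{n+1}=A_n\cup\{(n+1,p,\varepsilon): p\in\bigcup_{k=0}^{n+1}A_n^k,\ \varepsilon\in\{0,1\}\}$, and let $G_{n+1}$ be the group of all permutations $\sigma$ of $A_{n+1}$ for which there exist $\pi_\sigma\in G_n$ and bits $\varepsilon_{\sigma,p}\in\{0,1\}$ (for $p\in\bigcup_{k=0}^{n+1}A_n^k$) with $\sigma(x)=\pi_\sigma(x)$ for $x\in A_n$ and $\sigma((n+1,p,\varepsilon))=(n+1,\pi_\sigma(p),\varepsilon_{\sigma,p}+_2\varepsilon)$, where $\pi_\sigma(\langle p_0,\dots,p_{l-1}\rangle)=\langle\pi_\sigma(p_0),\dots,\pi_\sigma(p_{l-1})\rangle$ and $+_2$ is addition mod 2. Let $A=\bigcup_{n\in\omega}A_n$ be the set of atoms, $G=\{H\in\mathrm{Aut}(A):\forall n\in\omega\ (H\restriction A_n\in G_n)\}$, and let $\mathcal V$ be the class of hereditarily symmetric sets with respect to finite supports. Let $\mathfrak m=|A|$. Then in $\mathcal V$: $$\mathfrak m^2<\mathrm{seq}^{1-1}(\mathfrak m)<[\mathfrak m]^2<\mathrm{fin}(\mathfrak m).$$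
   Context: $\mathrm{Aut}(A)$ is the group of all permutations of $A$. Permutation model: $\pi\in G$ acts on sets by $\pi x=\{\pi y:y\in x\}$; $\mathrm{Fix}_G(E)=\{\pi\in G:\pi a=a\ \forall a\in E\}$; a set $x$ is symmetric if for some finite $E\subseteq A$ (a support), every $\pi\in\mathrm{Fix}_G(E)$ satisfies $\pi x=x$; $\mathcal V$ is the class of hereditarily symmetric sets. For a set $M$: $M^2=M\times M$, $[M]^2$ = 2-element subsets, $\mathrm{seq}^{1-1}(M)$ = finite sequences without repetition, $\mathrm{fin}(M)$ = finite subsets; for $\mathfrak m=|M|$ the corresponding symbols denote cardinalities. $|X|<|Y|$ means an injection $X\to Y$ exists but no bijection. *)

theory Defs
  imports Main
begin

text \<open>Base a is an atom of the initial set A_0;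
  New m p e is the new atom (m, p, e), where p is a finite sequence of earlier atoms
  and e :: bool is a bit (False = 0, True = 1).\<close>
datatype 'a atom = Base 'a | New nat "'a atom list" bool

primrec Alev :: "'a set \<Rightarrow> nat \<Rightarrow> 'a atom set" where
  "Alev A0 0 = Base ` A0"
| "Alev A0 (Suc n) = Alev A0 n \<union>
     {New (Suc n) p e | p e. set p \<subseteq> Alev A0 n \<and> length p \<le> Suc n}"

text \<open>The groups G_n; a permutation of A_n is represented as a function on the
  whole type that is the identity outside A_n. Addition mod 2 of bits is (\<noteq>).\<close>
primrec Glev :: "'a set \<Rightarrow> nat \<Rightarrow> ('a atom \<Rightarrow> 'a atom) set" where
  "Glev A0 0 = {\<sigma>. bij_betw \<sigma> (Alev A0 0) (Alev A0 0) \<and> (\<forall>x. x \<notin> Alev A0 0 \<longrightarrow> \<sigma> x = x)}"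
| "Glev A0 (Suc n) = {\<sigma>. bij_betw \<sigma> (Alev A0 (Suc n)) (Alev A0 (Suc n))
      \<and> (\<forall>x. x \<notin> Alev A0 (Suc n) \<longrightarrow> \<sigma> x = x)
      \<and> (\<exists>\<pi>\<in>Glev A0 n. \<exists>eps :: 'a atom list \<Rightarrow> bool.
            (\<forall>x\<in>Alev A0 n. \<sigma> x = \<pi> x)
          \<and> (\<forall>p e. set p \<subseteq> Alev A0 n \<and> length p \<le> Suc n \<longrightarrow>
                 \<sigma> (New (Suc n) p e) = New (Suc n) (map \<pi> p) (eps p \<noteq> e)))}"

definition Atoms :: "'a set \<Rightarrow> 'a atom set" where
  "Atoms A0 = (\<Union>n. Alev A0 n)"

definition Gperm :: "'a set \<Rightarrow> ('a atom \<Rightarrow> 'a atom) set" where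
  "Gperm A0 = {H. bij_betw H (Atoms A0) (Atoms A0) \<and> (\<forall>x. x \<notin> Atoms A0 \<longrightarrow> H x = x)
      \<and> (\<forall>n. (\<lambda>x. if x \<in> Alev A0 n then H x else x) \<in> Glev A0 n)}"

text \<open>A map f : X \<rightarrow> Y (between sets whose elements are built from atoms, with the
  induced actions actX, actY of permutations) is symmetric, i.e. belongs to the
  model, iff for some finite support E \<subseteq> A every \<pi> \<in> Fix_G(E) satisfies \<pi> f = f,
  i.e. f (\<pi> x) = \<pi> (f x) for x \<in> X.\<close>
definition sym_map ::
  "'a set \<Rightarrow> 'x set \<Rightarrow> (('a atom \<Rightarrow> 'a atom) \<Rightarrow> 'x \<Rightarrow> 'x)
     \<Rightarrow> (('a atom \<Rightarrow> 'a atom) \<Rightarrow> 'y \<Rightarrow> 'y) \<Rightarrow> ('x \<Rightarrow> 'y) \<Rightarrow> bool" where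
  "sym_map A0 X actX actY f \<longleftrightarrow>
     (\<exists>E. finite E \<and> E \<subseteq> Atoms A0 \<and>
        (\<forall>\<pi>\<in>Gperm A0. (\<forall>a\<in>E. \<pi> a = a) \<longrightarrow> (\<forall>x\<in>X. f (actX \<pi> x) = actY \<pi> (f x))))"

definition V_less ::
  "'a set \<Rightarrow> 'x set \<Rightarrow> (('a atom \<Rightarrow> 'a atom) \<Rightarrow> 'x \<Rightarrow> 'x)
     \<Rightarrow> 'y set \<Rightarrow> (('a atom \<Rightarrow> 'a atom) \<Rightarrow> 'y \<Rightarrow> 'y) \<Rightarrow> bool" where
  "V_less A0 X actX Y actY \<longleftrightarrow>
     (\<exists>f. inj_on f X \<and> f ` X \<subseteq> Y \<and> sym_map A0 X actX actY f) \<and>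
     \<not> (\<exists>f. bij_betw f X Y \<and> sym_map A0 X actX actY f)"

definition inj_seqs :: "'a set \<Rightarrow> 'a atom list set" where
  "inj_seqs A0 = {xs. set xs \<subseteq> Atoms A0 \<and> distinct xs}"

definition two_sets :: "'a set \<Rightarrow> 'a atom set set" where
  "two_sets A0 = {s. s \<subseteq> Atoms A0 \<and> card s = 2}"

definition fin_sets :: "'a set \<Rightarrow> 'a atom set set" where
  "fin_sets A0 = {s. s \<subseteq> Atoms A0 \<and> finite s}"

end

theory Submission
  imports Defs
begin


lemma Alev_mono_Suc: "Alev A0 n \<subseteq> Alev A0 (Suc n)" by auto

lemma Alev_mono: "m \<le> n \<Longrightarrow> Alev A0 m \<subseteq> Alev A0 n"
  by (induction n) (auto simp: le_Suc_eq)

lemma Base_Alev: "Base a \<in> Alev A0 n \<longleftrightarrow> a \<in> A0"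
  by (induction n) auto

lemma New_Alev: "New m p e \<in> Alev A0 n \<longleftrightarrow>
   (\<exists>k. m = Suc k \<and> Suc k \<le> n \<and> set p \<subseteq> Alev A0 k \<and> length p \<le> Suc k)"
proof (induction n)
  case 0 then show ?case by auto
next
  case (Suc n) then show ?case by (auto simp: le_Suc_eq)
qed

lemma Atoms_iff: "w \<in> Atoms A0 \<longleftrightarrow> (\<exists>n. w \<in> Alev A0 n)"
  by (auto simp: Atoms_def)

lemma New_Atoms: "New m p e \<in> Atoms A0 \<longleftrightarrow>
   (\<exists>k. m = Suc k \<and> set p \<subseteq> Alev A0 k \<and> length p \<le> Suc k)"
  unfolding Atoms_iff New_Alev by auto

lemma Base_Atoms: "Base a \<in> Atoms A0 \<longleftrightarrow> a \<in> A0"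
  unfolding Atoms_iff Base_Alev by auto

lemma New_Atoms_flip: "New m p e \<in> Atoms A0 \<Longrightarrow> New m p e' \<in> Atoms A0"
  unfolding New_Atoms by auto

primrec gen :: "('a \<Rightarrow> 'a) \<Rightarrow> (nat \<Rightarrow> 'a atom list \<Rightarrow> bool) \<Rightarrow> 'a atom \<Rightarrow> 'a atom" where
  "gen f eps (Base a) = Base (f a)"
| "gen f eps (New m p e) = New m (map (gen f eps) p) (eps m p \<noteq> e)"

primrec subs :: "'a atom \<Rightarrow> 'a atom set" where
  "subs (Base a) = {Base a}"
| "subs (New m p e) = insert (New m p e) (insert (New m p (\<not>e)) (\<Union> (set (map subs p))))"

lemma map_fix: "map f p = p \<Longrightarrow> z \<in> set p \<Longrightarrow> f z = z"
  by (induction p) auto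

lemma finite_subs: "finite (subs w)"
  by (induction w) auto

lemma self_subs: "w \<in> subs w"
  by (cases w) auto

lemma subs_flip: "New m p e \<in> subs w \<Longrightarrow> New m p (\<not>e) \<in> subs w"
  by (induction w) auto

lemma subs_Alev: "w \<in> Alev A0 n \<Longrightarrow> subs w \<subseteq> Alev A0 n"
proof (induction w arbitrary: n)
  case (Base x) then show ?case by auto
next
  case (New m p e)
  then obtain k where k: "m = Suc k" "Suc k \<le> n" "set p \<subseteq> Alev A0 k" "length p \<le> Suc k"
    by (auto simp: New_Alev)
  have kn: "Alev A0 k \<subseteq> Alev A0 n" using k by (intro Alev_mono) auto
  have "New m p (\<not>e) \<in> Alev A0 n" using k by (auto simp: New_Alev)
  moreover have "subs z \<subseteq> Alev A0 n" if "z \<in> set p" for z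
  proof -
    have "z \<in> Alev A0 n" using that k(3) kn by blast
    then show ?thesis using New.IH[OF that] by blast
  qed
  ultimately show ?case using New.prems by (simp del: Alev.simps) blast
qed

lemma Alev_Atoms: "Alev A0 n \<subseteq> Atoms A0" unfolding Atoms_def by (rule UN_upper) simp

lemma subs_Atoms: assumes "w \<in> Atoms A0" shows "subs w \<subseteq> Atoms A0"
proof -
  obtain n where "w \<in> Alev A0 n" using assms unfolding Atoms_iff by blast
  then have "subs w \<subseteq> Alev A0 n" by (rule subs_Alev)
  then show ?thesis using Alev_Atoms[of A0 n] by (rule subset_trans)
qed

lemma gen_Alev: "f ` A0 \<subseteq> A0 \<Longrightarrow> w \<in> Alev A0 n \<Longrightarrow> gen f eps w \<in> Alev A0 n"
proof (induction n arbitrary: w)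
  case 0 then show ?case by auto
next
  case (Suc n)
  show ?case
  proof (cases "w \<in> Alev A0 n")
    case True then have "gen f eps w \<in> Alev A0 n" using Suc.IH Suc.prems(1) by blast
    then show ?thesis using Alev_mono_Suc by blast
  next
    case False
    then obtain p e where w: "w = New (Suc n) p e" "set p \<subseteq> Alev A0 n" "length p \<le> Suc n"
      using Suc.prems(2) by auto
    have "set (map (gen f eps) p) \<subseteq> Alev A0 n" using w(2) Suc.IH Suc.prems(1) by auto
    then show ?thesis using w by simp
  qed
qed

lemma set_sub_Atoms: assumes "New m p e \<in> Atoms A0" shows "set p \<subseteq> Atoms A0"
proof -
  obtain k where "set p \<subseteq> Alev A0 k" using assms unfolding New_Atoms by blast
  then show ?thesis using Alev_Atoms[of A0 k] by (rule subset_trans)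
qed

lemma gen_inj: "inj_on f A0 \<Longrightarrow> w \<in> Atoms A0 \<Longrightarrow> v \<in> Atoms A0 \<Longrightarrow> gen f eps w = gen f eps v \<Longrightarrow> w = v"
proof (induction w arbitrary: v)
  case (Base x)
  show ?case
  proof (cases v)
    case (Base y)
    have "f x = f y" using Base.prems(4) \<open>v = Base y\<close> by simp
    moreover have "x \<in> A0" "y \<in> A0" using Base.prems(2,3) \<open>v = Base y\<close> by (simp_all add: Base_Atoms)
    ultimately have "x = y" using Base.prems(1) by (meson inj_onD)
    then show ?thesis using \<open>v = Base y\<close> by simp
  next
    case (New m q e) then show ?thesis using Base.prems(4) by simp
  qed
next
  case (New m p e)
  show ?case
  proof (cases v)
    case (Base y) then show ?thesis using New.prems(4) by simp
  next
    case (New m' q e')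
    have v: "New m (map (gen f eps) p) (eps m p \<noteq> e) = New m' (map (gen f eps) q) (eps m' q \<noteq> e')"
      using New.prems(4) unfolding \<open>v = New m' q e'\<close> gen.simps .
    have vv: "m = m' \<and> map (gen f eps) p = map (gen f eps) q \<and> (eps m p \<noteq> e) = (eps m' q \<noteq> e')"
      using atom.inject(2)[THEN iffD1, OF v] .
    then have v1: "m = m'" and v2: "map (gen f eps) p = map (gen f eps) q"
      and v3: "(eps m p \<noteq> e) = (eps m' q \<noteq> e')" by blast+
    have sp: "set p \<subseteq> Atoms A0" using set_sub_Atoms[OF New.prems(2)] .
    have sq: "set q \<subseteq> Atoms A0" using set_sub_Atoms[of m' q e' A0] New.prems(3) \<open>v = New m' q e'\<close> by simp
    have pq: "p = q"
    proof (rule list.inj_map_strong[OF _ v2])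
      fix z za assume z: "z \<in> set p" "za \<in> set q" "gen f eps z = gen f eps za"
      have za: "z \<in> Atoms A0" "za \<in> Atoms A0" using sp sq z(1,2) by blast+
      show "z = za" by (rule New.IH[OF z(1) New.prems(1) za z(3)])
    qed
    have "(eps m p \<noteq> e) = (eps m p \<noteq> e')" using v3 unfolding v1 pq .
    then have "e = e'" by blast
    then show ?thesis using v1 pq \<open>v = New m' q e'\<close> by simp
  qed
qed

lemma list_preimage: "set q \<subseteq> g ` A \<Longrightarrow> \<exists>p. set p \<subseteq> A \<and> q = map g p"
proof (induction q)
  case Nil then show ?case by auto
next
  case (Cons a q)
  have "set q \<subseteq> g ` A" using Cons.prems by simp
  then obtain p where "set p \<subseteq> A" "q = map g p" using Cons.IH by blast
  moreover have "a \<in> g ` A" using Cons.prems by simp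
  then obtain x where "x \<in> A" "a = g x" by blast
  ultimately show ?case by (intro exI[of _ "x # p"]) simp
qed

lemma gen_surj: "f ` A0 = A0 \<Longrightarrow> Alev A0 n \<subseteq> gen f eps ` Alev A0 n"
proof (induction n)
  case 0 then show ?case by (auto simp: image_image)
next
  case (Suc n)
  show ?case
  proof
    fix w assume w: "w \<in> Alev A0 (Suc n)"
    show "w \<in> gen f eps ` Alev A0 (Suc n)"
    proof (cases "w \<in> Alev A0 n")
      case True
      then have "w \<in> gen f eps ` Alev A0 n" using Suc.IH Suc.prems by blast
      then show ?thesis using Alev_mono_Suc[of A0 n] by blast
    next
      case False
      then obtain q e where q: "w = New (Suc n) q e" "set q \<subseteq> Alev A0 n" "length q \<le> Suc n"
        using w by auto
      then have "set q \<subseteq> gen f eps ` Alev A0 n" using Suc.IH Suc.prems by blast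
      then obtain p where p: "set p \<subseteq> Alev A0 n" "q = map (gen f eps) p"
        using list_preimage[of q "gen f eps" "Alev A0 n"] by blast
      have 1: "New (Suc n) p (eps (Suc n) p \<noteq> e) \<in> Alev A0 (Suc n)" using p q by auto
      have 2: "gen f eps (New (Suc n) p (eps (Suc n) p \<noteq> e)) = w" using p q by auto
      show ?thesis using 1 2 by (metis image_eqI)
    qed
  qed
qed

lemma gen_bij: assumes a: "inj_on f A0" "f ` A0 = A0"
  shows "bij_betw (gen f eps) (Alev A0 n) (Alev A0 n)"
proof -
  have i: "inj_on (gen f eps) (Alev A0 n)"
  proof (rule inj_onI)
    fix x y assume "x \<in> Alev A0 n" "y \<in> Alev A0 n" "gen f eps x = gen f eps y"
    then show "x = y" using gen_inj[OF a(1)] Alev_Atoms[of A0 n] by blast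
  qed
  have s1: "gen f eps ` Alev A0 n \<subseteq> Alev A0 n"
  proof
    fix y assume "y \<in> gen f eps ` Alev A0 n"
    then obtain x where "x \<in> Alev A0 n" "y = gen f eps x" by blast
    then show "y \<in> Alev A0 n" using gen_Alev[of f A0 x n eps] a(2) by simp
  qed
  have s2: "Alev A0 n \<subseteq> gen f eps ` Alev A0 n" by (rule gen_surj[OF a(2)])
  show ?thesis unfolding bij_betw_def using i s1 s2 by blast
qed



definition liftH :: "'a set \<Rightarrow> ('a \<Rightarrow> 'a) \<Rightarrow> (nat \<Rightarrow> 'a atom list \<Rightarrow> bool) \<Rightarrow> 'a atom \<Rightarrow> 'a atom" where
  "liftH A0 f eps = (\<lambda>x. if x \<in> Atoms A0 then gen f eps x else x)"


lemma gen_Atoms: "inj_on f A0 \<Longrightarrow> f ` A0 = A0 \<Longrightarrow> bij_betw (gen f eps) (Atoms A0) (Atoms A0)"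
proof -
  assume a: "inj_on f A0" "f ` A0 = A0"
  have "inj_on (gen f eps) (Atoms A0)" using gen_inj[OF a(1)] by (meson inj_onI)
  moreover have "gen f eps ` Atoms A0 = Atoms A0"
    using gen_bij[OF a, where eps=eps] unfolding bij_betw_def Atoms_def image_UN by simp
  ultimately show ?thesis by (simp add: bij_betw_def)
qed

lemma restr_bij: "bij_betw (gen f eps) (Alev A0 n) (Alev A0 n) \<Longrightarrow>
  bij_betw (\<lambda>x. if x \<in> Alev A0 n then liftH A0 f eps x else x) (Alev A0 n) (Alev A0 n)"
  apply (erule bij_betw_cong[THEN iffD1, rotated])
  using Alev_Atoms[of A0 n] by (auto simp: liftH_def)

lemma liftH_Glev: assumes "inj_on f A0" "f ` A0 = A0"
  shows "(\<lambda>x. if x \<in> Alev A0 n then liftH A0 f eps x else x) \<in> Glev A0 n"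
proof (induction n)
  case 0
  have "bij_betw (\<lambda>x. if x \<in> Alev A0 0 then liftH A0 f eps x else x) (Alev A0 0) (Alev A0 0)"
    by (rule restr_bij[OF gen_bij[OF assms]])
  then show ?case by auto
next
  case (Suc n)
  let ?R = "\<lambda>x. if x \<in> Alev A0 (Suc n) then liftH A0 f eps x else x"
  let ?P = "\<lambda>x. if x \<in> Alev A0 n then liftH A0 f eps x else x"
  have b: "bij_betw ?R (Alev A0 (Suc n)) (Alev A0 (Suc n))"
    by (rule restr_bij[OF gen_bij[OF assms]])
  have c: "\<forall>x\<in>Alev A0 n. ?R x = ?P x" using Alev_mono_Suc by auto
  have d: "?R (New (Suc n) p e) = New (Suc n) (map ?P p) (eps (Suc n) p \<noteq> e)"
    if "set p \<subseteq> Alev A0 n" "length p \<le> Suc n" for p e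
  proof -
    have 1: "New (Suc n) p e \<in> Alev A0 (Suc n)" using that by auto
    then have 2: "New (Suc n) p e \<in> Atoms A0" using Alev_Atoms by blast
    have 3: "map ?P p = map (gen f eps) p"
      apply (rule map_cong[OF refl])
      using that Alev_Atoms[of A0 n] by (auto simp: liftH_def)
    have "?R (New (Suc n) p e) = gen f eps (New (Suc n) p e)" using 1 2 by (simp add: liftH_def)
    then show ?thesis using 3 by simp
  qed
  have out: "\<forall>x. x \<notin> Alev A0 (Suc n) \<longrightarrow> ?R x = x" by (simp del: Alev.simps)
  show ?case
    apply (simp only: Glev.simps mem_Collect_eq)
    apply (intro conjI b out)
    apply (rule bexI[OF _ Suc.IH])
    apply (rule exI[of _ "eps (Suc n)"])
    using c d by blast
qed

lemma liftH_Gperm: assumes "inj_on f A0" "f ` A0 = A0"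
  shows "liftH A0 f eps \<in> Gperm A0"
proof -
  have "bij_betw (liftH A0 f eps) (Atoms A0) (Atoms A0)"
    apply (rule bij_betw_cong[THEN iffD1, rotated, OF gen_Atoms[OF assms, where eps=eps]])
    by (auto simp: liftH_def)
  moreover have "\<forall>x. x \<notin> Atoms A0 \<longrightarrow> liftH A0 f eps x = x" by (simp add: liftH_def)
  ultimately show ?thesis unfolding Gperm_def using liftH_Glev[OF assms] by blast
qed

lemma Gperm_bij: "\<pi> \<in> Gperm A0 \<Longrightarrow> bij_betw \<pi> (Atoms A0) (Atoms A0)"
  by (simp add: Gperm_def)

lemma Gperm_Atoms: "\<pi> \<in> Gperm A0 \<Longrightarrow> w \<in> Atoms A0 \<Longrightarrow> \<pi> w \<in> Atoms A0"
  using Gperm_bij bij_betwE by blast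

lemma Gperm_inj: "\<pi> \<in> Gperm A0 \<Longrightarrow> inj_on \<pi> (Atoms A0)"
  using Gperm_bij bij_betw_def by blast

lemma Gperm_restr: "\<pi> \<in> Gperm A0 \<Longrightarrow> (\<lambda>x. if x \<in> Alev A0 n then \<pi> x else x) \<in> Glev A0 n"
  by (simp add: Gperm_def)

lemma Gperm_Alev: assumes "\<pi> \<in> Gperm A0" "w \<in> Alev A0 n" shows "\<pi> w \<in> Alev A0 n"
proof -
  have "bij_betw (\<lambda>x. if x \<in> Alev A0 n then \<pi> x else x) (Alev A0 n) (Alev A0 n)"
    using Gperm_restr[OF assms(1), of n] by (cases n) auto
  then show ?thesis using assms(2) bij_betwE by fastforce
qed

lemma Gperm_New: assumes "\<pi> \<in> Gperm A0" "New m p e \<in> Atoms A0"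
  shows "\<exists>b. \<forall>e'. \<pi> (New m p e') = New m (map \<pi> p) (b \<noteq> e')"
proof -
  obtain k where k: "m = Suc k" "set p \<subseteq> Alev A0 k" "length p \<le> Suc k"
    using assms(2) by (auto simp: New_Atoms)
  let ?R = "\<lambda>x. if x \<in> Alev A0 (Suc k) then \<pi> x else x"
  have "?R \<in> Glev A0 (Suc k)" using Gperm_restr[OF assms(1)] .
  then obtain \<rho> eps where r: "\<forall>x\<in>Alev A0 k. ?R x = \<rho> x"
    "\<forall>p e. set p \<subseteq> Alev A0 k \<and> length p \<le> Suc k \<longrightarrow>
                 ?R (New (Suc k) p e) = New (Suc k) (map \<rho> p) (eps p \<noteq> e)"
    by auto
  have "map \<rho> p = map \<pi> p" using r(1) k(2) Alev_mono_Suc[of A0 k] by (auto intro!: map_cong)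
  moreover have "New (Suc k) p e' \<in> Alev A0 (Suc k)" for e' using k by auto
  ultimately have "\<pi> (New m p e') = New m (map \<pi> p) (eps p \<noteq> e')" for e'
    using r(2) k by (metis (no_types, lifting))
  then show ?thesis by blast
qed

lemma Gperm_Base: assumes "\<pi> \<in> Gperm A0" "a \<in> A0" shows "\<exists>b\<in>A0. \<pi> (Base a) = Base b"
  using Gperm_Alev[OF assms(1), of "Base a" 0] assms(2) by auto

lemma gen_fix: "(\<forall>x. Base x \<in> subs z \<longrightarrow> f x = x) \<Longrightarrow> (\<forall>m q e. New m q e \<in> subs z \<longrightarrow> \<not> eps m q)
   \<Longrightarrow> gen f eps z = z"
proof (induction z)
  case (Base x) then show ?case by simp
next
  case (New m p e)
  have mp: "map (gen f eps) p = p"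
  proof (rule map_idI)
    fix z assume z: "z \<in> set p"
    have sub: "subs z \<subseteq> subs (New m p e)" using z by auto
    have h1: "\<forall>x. Base x \<in> subs z \<longrightarrow> f x = x" using New.prems(1) sub by blast
    have h2: "\<forall>m q e. New m q e \<in> subs z \<longrightarrow> \<not> eps m q" using New.prems(2) sub by blast
    show "gen f eps z = z" using New.IH[OF z h1 h2] .
  qed
  have "New m p e \<in> subs (New m p e)" by simp
  then have "\<not> eps m p" using New.prems(2) by blast
  then show ?case using mp by simp
qed

lemma gen_leaf: "gen f eps z = z \<Longrightarrow> Base x \<in> subs z \<Longrightarrow> f x = x"
proof (induction z)
  case (Base y) then show ?case by simp
next
  case (New m p e)
  have mp: "map (gen f eps) p = p" using New.prems(1) by simp
  from New.prems(2) obtain z where z: "z \<in> set p" "Base x \<in> subs z" by auto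
  have "gen f eps z = z" using map_fix[OF mp z(1)] .
  then show ?case using New.IH[OF z(1)] z(2) by blast
qed

lemma gen_comp: "gen f (\<lambda>_ _. False) (gen g (\<lambda>_ _. False) z) = gen (\<lambda>a. f (g a)) (\<lambda>_ _. False) z"
proof (induction z)
  case (Base x) then show ?case by simp
next
  case (New m p e)
  have "map (gen f (\<lambda>_ _. False)) (map (gen g (\<lambda>_ _. False)) p) = map (gen (\<lambda>a. f (g a)) (\<lambda>_ _. False)) p"
    unfolding map_map
    apply (rule map_cong[OF refl])
    apply (subst comp_apply)
    apply (rule New.IH)
    apply assumption
    done
  then show ?case by simp
qed



abbreviation eps0 :: "nat \<Rightarrow> 'a atom list \<Rightarrow> bool" where "eps0 \<equiv> (\<lambda>_ _. False)"

definition swapf :: "'a \<Rightarrow> 'a \<Rightarrow> 'a \<Rightarrow> 'a" where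
  "swapf a b = (\<lambda>x. if x = a then b else if x = b then a else x)"

definition cyc :: "'a \<Rightarrow> 'a \<Rightarrow> 'a \<Rightarrow> 'a \<Rightarrow> 'a" where
  "cyc a b c = (\<lambda>x. if x = a then b else if x = b then c else if x = c then a else x)"

definition leaves :: "'a atom \<Rightarrow> 'a set" where
  "leaves w = {x. Base x \<in> subs w}"

lemma finite_leaves: "finite (leaves w)"
proof -
  have "leaves w = Base -` subs w" by (auto simp: leaves_def)
  then show ?thesis using finite_vimageI[OF finite_subs, of Base w] by (simp add: inj_def)
qed

lemma swap_ok: assumes "a \<in> A0" "b \<in> A0"
  shows "inj_on (swapf a b) A0" "swapf a b ` A0 = A0"
proof -
  have inv: "swapf a b (swapf a b x) = x" for x by (simp add: swapf_def)
  show "inj_on (swapf a b) A0" by (metis inv inj_onI)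
  have "swapf a b ` A0 \<subseteq> A0" using assms by (auto simp: swapf_def)
  moreover have "A0 \<subseteq> swapf a b ` A0"
  proof
    fix x assume "x \<in> A0"
    then have "swapf a b x \<in> A0" using assms by (auto simp: swapf_def)
    then show "x \<in> swapf a b ` A0" using inv[of x] by (metis image_eqI)
  qed
  ultimately show "swapf a b ` A0 = A0" by blast
qed

lemma cyc_ok: assumes "a \<in> A0" "b \<in> A0" "c \<in> A0" "a \<noteq> b" "b \<noteq> c" "a \<noteq> c"
  shows "inj_on (cyc a b c) A0" "cyc a b c ` A0 = A0"
proof -
  have inv: "cyc a c b (cyc a b c x) = x" for x using assms(4-6) by (simp add: cyc_def)
  have inv2: "cyc a b c (cyc a c b x) = x" for x using assms(4-6) by (simp add: cyc_def)
  show "inj_on (cyc a b c) A0" by (metis inv inj_onI)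
  have "cyc a b c ` A0 \<subseteq> A0" using assms by (auto simp: cyc_def)
  moreover have "A0 \<subseteq> cyc a b c ` A0"
  proof
    fix x assume "x \<in> A0"
    then have "cyc a c b x \<in> A0" using assms by (auto simp: cyc_def)
    then show "x \<in> cyc a b c ` A0" using inv2[of x] by (metis image_eqI)
  qed
  ultimately show "cyc a b c ` A0 = A0" by blast
qed

lemma liftH_on: "w \<in> Atoms A0 \<Longrightarrow> liftH A0 f eps w = gen f eps w"
  by (simp add: liftH_def)

lemma lift_fix: assumes "w \<in> Atoms A0" "\<forall>x\<in>leaves w. f x = x"
  shows "liftH A0 f eps0 w = w"
  using gen_fix[of w f eps0] assms by (simp add: liftH_on leaves_def)

lemma lift_leaf: assumes "w \<in> Atoms A0" "liftH A0 f eps0 w = w" "x \<in> leaves w"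
  shows "f x = x"
  using gen_leaf[of f eps0 w x] assms by (simp add: liftH_on leaves_def)

lemma fresh: assumes "infinite A0" "finite F" shows "\<exists>d\<in>A0. d \<notin> F"
proof -
  have "infinite (A0 - F)" using assms by (simp add: Diff_infinite_finite)
  then obtain d where "d \<in> A0 - F" using infinite_imp_nonempty by blast
  then show ?thesis by blast
qed


definition Tset :: "'a atom set \<Rightarrow> 'a atom set" where
  "Tset E = (\<Union>z\<in>E. subs z)"

lemma fix_subs: assumes "\<pi> \<in> Gperm A0" shows "z \<in> Atoms A0 \<Longrightarrow> \<pi> z = z \<Longrightarrow> w \<in> subs z \<Longrightarrow> \<pi> w = w"
proof (induction z)
  case (Base x) then show ?case by simp
next
  case (New m p e)
  obtain b where b: "\<And>e'. \<pi> (New m p e') = New m (map \<pi> p) (b \<noteq> e')"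
    using Gperm_New[OF assms New.prems(1)] by blast
  have "New m (map \<pi> p) (b \<noteq> e) = New m p e" using New.prems(2) b[of e] by simp
  then have mp: "map \<pi> p = p" and bf: "\<not> b" by auto
  have "\<pi> (New m p (\<not> e)) = New m p (\<not> e)" using b[of "\<not> e"] mp bf by simp
  moreover have "\<pi> w = w" if "z \<in> set p" "w \<in> subs z" for z
  proof -
    have "z \<in> Atoms A0" using set_sub_Atoms[OF New.prems(1)] that(1) by blast
    moreover have "\<pi> z = z" using map_fix[OF mp that(1)] .
    ultimately show ?thesis using New.IH[OF that(1)] that(2) by blast
  qed
  ultimately show ?case using New.prems(2,3) by auto
qed

lemma fixT: assumes "\<pi> \<in> Gperm A0" "E \<subseteq> Atoms A0" "\<forall>a\<in>E. \<pi> a = a" "w \<in> Tset E"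
  shows "\<pi> w = w"
proof -
  obtain z where "z \<in> E" "w \<in> subs z" using assms(4) by (auto simp: Tset_def)
  then show ?thesis using fix_subs[OF assms(1)] assms(2,3) by blast
qed

lemma invT: assumes "infinite A0" "finite E" "E \<subseteq> Atoms A0" "w \<in> Atoms A0"
  "\<forall>\<pi>\<in>Gperm A0. (\<forall>a\<in>E. \<pi> a = a) \<longrightarrow> \<pi> w = w"
  shows "w \<in> Tset E"
proof (rule ccontr)
  assume nT: "w \<notin> Tset E"
  show False
  proof (cases w)
    case (Base x)
    let ?L = "\<Union>z\<in>E. leaves z"
    have fL: "finite ?L" using assms(2) finite_leaves by blast
    have xL: "x \<notin> ?L" using nT Base by (auto simp: Tset_def leaves_def)
    have xA: "x \<in> A0" using assms(4) Base by (simp add: Base_Atoms)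
    obtain d where d: "d \<in> A0" "d \<notin> insert x ?L" using fresh[OF assms(1)] fL by (meson finite_insert)
    let ?t = "liftH A0 (swapf x d) eps0"
    have tG: "?t \<in> Gperm A0" using liftH_Gperm swap_ok[OF xA d(1)] by blast
    have "?t a = a" if "a \<in> E" for a
    proof (rule lift_fix)
      show "a \<in> Atoms A0" using that assms(3) by blast
      show "\<forall>y\<in>leaves a. swapf x d y = y" using that xL d(2) by (auto simp: swapf_def)
    qed
    then have "?t w = w" using assms(5) tG by blast
    moreover have "?t w = Base d" using Base assms(4) by (simp add: liftH_on swapf_def)
    ultimately show False using Base d(2) by simp
  next
    case (New m p e)
    have noE: "New m p e' \<notin> subs z" if "z \<in> E" for z e'
    proof
      assume "New m p e' \<in> subs z"
      then have "New m p e \<in> subs z" using subs_flip[of m p e' z] by (cases "e = e'") auto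
      then show False using nT New that by (auto simp: Tset_def)
    qed
    let ?e1 = "\<lambda>m' q. m' = m \<and> q = p"
    let ?t = "liftH A0 id ?e1"
    have tG: "?t \<in> Gperm A0" using liftH_Gperm[of id A0 ?e1] by simp
    have "?t a = a" if "a \<in> E" for a
    proof -
      have "a \<in> Atoms A0" using that assms(3) by blast
      moreover have "gen id ?e1 a = a" using gen_fix[of a id ?e1] noE[OF that] by auto
      ultimately show ?thesis by (simp add: liftH_on)
    qed
    then have "?t w = w" using assms(5) tG by blast
    moreover have "?t w = New m (map (gen id ?e1) p) (\<not> e)" using New assms(4) by (simp add: liftH_on)
    ultimately show False using New by simp
  qed
qed

lemma finite_Tset: "finite E \<Longrightarrow> finite (Tset E)"
  unfolding Tset_def using finite_subs by blast

lemma Tset_Atoms: "E \<subseteq> Atoms A0 \<Longrightarrow> Tset E \<subseteq> Atoms A0"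
  unfolding Tset_def using subs_Atoms by blast


definition g1 :: "'a atom \<times> 'a atom \<Rightarrow> 'a atom list" where
  "g1 x = (if fst x = snd x then [fst x] else [fst x, snd x])"

lemma g1_inj: "inj_on g1 S"
  by (rule inj_onI) (auto simp: g1_def split: if_splits simp: prod_eq_iff)

lemma g1_ne: "g1 x \<noteq> []" by (simp add: g1_def)

lemma g1_set: "set (g1 x) = {fst x, snd x}" by (auto simp: g1_def)

lemma g1_distinct: "distinct (g1 x)" by (simp add: g1_def)

lemma no_bij1: assumes "infinite A0" "bij_betw f (Atoms A0 \<times> Atoms A0) (inj_seqs A0)"
  "sym_map A0 (Atoms A0 \<times> Atoms A0) (\<lambda>\<pi>. map_prod \<pi> \<pi>) (\<lambda>\<pi>. map \<pi>) f"
  shows False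
proof -
  obtain E where E: "finite E" "E \<subseteq> Atoms A0"
    "\<forall>\<pi>\<in>Gperm A0. (\<forall>a\<in>E. \<pi> a = a) \<longrightarrow> (\<forall>x\<in>Atoms A0 \<times> Atoms A0. f (map_prod \<pi> \<pi> x) = map \<pi> (f x))"
    using assms(3) unfolding sym_map_def by blast
  define T where "T = Tset E"
  have fT: "finite T" using finite_Tset[OF E(1)] T_def by simp
  have TA: "T \<subseteq> Atoms A0" using Tset_Atoms[OF E(2)] T_def by simp
  define S where "S = {xs \<in> inj_seqs A0. set xs \<subseteq> T}"
  have inj: "inj_on f (Atoms A0 \<times> Atoms A0)" using assms(2) by (rule bij_betw_imp_inj_on)
  have sub: "S \<subseteq> f ` (T \<times> T)"
  proof
    fix xs assume xs: "xs \<in> S"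
    then have "xs \<in> inj_seqs A0" unfolding S_def by blast
    then have "xs \<in> f ` (Atoms A0 \<times> Atoms A0)" using bij_betw_imp_surj_on[OF assms(2)] by simp
    then obtain x where x: "x \<in> Atoms A0 \<times> Atoms A0" "f x = xs" by (rule imageE) simp
    have fixx: "\<pi> (fst x) = fst x \<and> \<pi> (snd x) = snd x"
      if \<pi>: "\<pi> \<in> Gperm A0" "\<forall>a\<in>E. \<pi> a = a" for \<pi>
    proof -
      have "map \<pi> xs = xs"
        using fixT[OF \<pi>(1) E(2) \<pi>(2)] xs unfolding S_def T_def by (auto intro: map_idI)
      then have "f (map_prod \<pi> \<pi> x) = f x" using E(3) \<pi> x by auto
      moreover have "map_prod \<pi> \<pi> x \<in> Atoms A0 \<times> Atoms A0"
        using x(1) Gperm_Atoms[OF \<pi>(1)] by (cases x) auto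
      ultimately have "map_prod \<pi> \<pi> x = x" using inj x(1) by (meson inj_onD)
      then show ?thesis by (cases x) auto
    qed
    have "fst x \<in> T" unfolding T_def
      by (rule invT[OF assms(1) E(1,2)]) (use x(1) fixx in auto)
    moreover have "snd x \<in> T" unfolding T_def
      by (rule invT[OF assms(1) E(1,2)]) (use x(1) fixx in auto)
    ultimately show "xs \<in> f ` (T \<times> T)" using x(2) by (metis image_eqI mem_Times_iff)
  qed
  have fS: "finite S" using sub fT by (meson finite_SigmaI finite_imageI finite_subset)
  have c1: "card S \<le> card (T \<times> T)"
    using card_mono[OF finite_imageI[OF finite_SigmaI[OF fT fT]] sub] card_image_le[of "T \<times> T" f] fT
    by simp
  have sub2: "insert [] (g1 ` (T \<times> T)) \<subseteq> S"
    using TA by (auto simp: S_def inj_seqs_def g1_set g1_distinct)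
  have n: "[] \<notin> g1 ` (T \<times> T)" using g1_ne by (metis imageE)
  have ci: "card (g1 ` (T \<times> T)) = card (T \<times> T)" by (rule card_image[OF g1_inj])
  have "card (insert [] (g1 ` (T \<times> T))) = Suc (card (T \<times> T))"
    using card_insert_disjoint[OF finite_imageI[OF finite_SigmaI[OF fT fT]] n] ci by simp
  then have "Suc (card (T \<times> T)) \<le> card S" using card_mono[OF fS sub2] by simp
  then show False using c1 by simp
qed


lemma lift_swap_G: "a \<in> A0 \<Longrightarrow> b \<in> A0 \<Longrightarrow> liftH A0 (swapf a b) eps0 \<in> Gperm A0"
  by (rule liftH_Gperm[OF swap_ok(1) swap_ok(2)])

lemma lift_fixE: assumes "E \<subseteq> Atoms A0" "\<forall>z\<in>E. \<forall>y\<in>leaves z. f y = y"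
  shows "\<forall>z\<in>E. liftH A0 f eps0 z = z"
proof
  fix z assume "z \<in> E"
  then show "liftH A0 f eps0 z = z" using assms by (intro lift_fix) auto
qed

lemma lift_Base: "a \<in> A0 \<Longrightarrow> liftH A0 f eps (Base a) = Base (f a)"
  by (simp add: liftH_on Base_Atoms)

lemma no_bij2: assumes "infinite A0" "bij_betw f (inj_seqs A0) (two_sets A0)"
  "sym_map A0 (inj_seqs A0) (\<lambda>\<pi>. map \<pi>) (\<lambda>\<pi>. image \<pi>) f"
  shows False
proof -
  obtain E where E: "finite E" "E \<subseteq> Atoms A0"
    "\<forall>\<pi>\<in>Gperm A0. (\<forall>a\<in>E. \<pi> a = a) \<longrightarrow> (\<forall>x\<in>inj_seqs A0. f (map \<pi> x) = \<pi> ` (f x))"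
    using assms(3) unfolding sym_map_def by blast
  define L where "L = (\<Union>z\<in>E. leaves z)"
  have fL: "finite L" using E(1) finite_leaves L_def by blast
  obtain a where a: "a \<in> A0" "a \<notin> L" using fresh[OF assms(1) fL] by blast
  obtain b where b: "b \<in> A0" "b \<notin> insert a L" using fresh[OF assms(1)] fL by (meson finite_insert)
  define y where "y = {Base a, Base b}"
  have y2: "y \<in> two_sets A0" using a b by (auto simp: y_def two_sets_def Base_Atoms)
  have inj: "inj_on f (inj_seqs A0)" using assms(2) by (rule bij_betw_imp_inj_on)
  have "y \<in> f ` inj_seqs A0" using bij_betw_imp_surj_on[OF assms(2)] y2 by simp
  then obtain xs where xs: "xs \<in> inj_seqs A0" "f xs = y" by (rule imageE) simp
  have xsA: "set xs \<subseteq> Atoms A0" using xs(1) by (simp add: inj_seqs_def)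
  have mapG: "map \<pi> xs \<in> inj_seqs A0" if "\<pi> \<in> Gperm A0" for \<pi>
  proof -
    have "inj_on \<pi> (set xs)" using Gperm_inj[OF that] xsA by (rule inj_on_subset)
    moreover have "distinct xs" using xs(1) by (simp add: inj_seqs_def)
    ultimately have "distinct (map \<pi> xs)" by (simp add: distinct_map)
    moreover have "set (map \<pi> xs) \<subseteq> Atoms A0" using xsA Gperm_Atoms[OF that] by auto
    ultimately show ?thesis by (simp add: inj_seqs_def)
  qed
  let ?s = "liftH A0 (swapf a b) eps0"
  have sG: "?s \<in> Gperm A0" by (rule lift_swap_G[OF a(1) b(1)])
  have sE: "\<forall>z\<in>E. ?s z = z"
    by (rule lift_fixE[OF E(2)]) (use a(2) b(2) in \<open>auto simp: L_def swapf_def\<close>)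
  have "?s (Base a) = Base b" by (simp add: lift_Base[OF a(1)] swapf_def)
  moreover have "?s (Base b) = Base a" using b(2) by (simp add: lift_Base[OF b(1)] swapf_def)
  ultimately have "?s ` y = y" by (auto simp: y_def)
  moreover have "\<forall>x\<in>inj_seqs A0. f (map ?s x) = ?s ` f x" using E(3) sG sE by blast
  then have "f (map ?s xs) = ?s ` f xs" using xs(1) by blast
  ultimately have "f (map ?s xs) = f xs" using xs(2) by simp
  then have "map ?s xs = xs" by (rule inj_onD[OF inj _ mapG[OF sG] xs(1)])
  then have noa: "a \<notin> leaves z" if "z \<in> set xs" for z
  proof -
    have 1: "?s z = z" using map_fix[OF \<open>map ?s xs = xs\<close> that] .
    have 2: "z \<in> Atoms A0" using xsA that by blast
    show ?thesis
    proof
      assume "a \<in> leaves z"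
      then have "swapf a b a = a" using lift_leaf[OF 2 1] by blast
      then show False using b(2) by (auto simp: swapf_def)
    qed
  qed
  define L2 where "L2 = insert a (insert b (L \<union> (\<Union>z\<in>set xs. leaves z)))"
  have fL2: "finite L2" using fL by (simp add: L2_def finite_leaves)
  obtain d where d: "d \<in> A0" "d \<notin> L2" using fresh[OF assms(1) fL2] by blast
  let ?t = "liftH A0 (swapf a d) eps0"
  have tG: "?t \<in> Gperm A0" by (rule lift_swap_G[OF a(1) d(1)])
  have tE: "\<forall>z\<in>E. ?t z = z"
    by (rule lift_fixE[OF E(2)]) (use a(2) d(2) in \<open>auto simp: L_def L2_def swapf_def\<close>)
  have "map ?t xs = xs"
  proof (rule map_idI)
    fix z assume z: "z \<in> set xs"
    show "?t z = z"
    proof (rule lift_fix)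
      show "z \<in> Atoms A0" using xsA z by blast
      show "\<forall>y\<in>leaves z. swapf a d y = y" using noa[OF z] d(2) z by (auto simp: L2_def swapf_def)
    qed
  qed
  moreover have "\<forall>x\<in>inj_seqs A0. f (map ?t x) = ?t ` f x" using E(3) tG tE by blast
  then have "f (map ?t xs) = ?t ` f xs" using xs(1) by blast
  ultimately have "f xs = ?t ` y" using xs(2) by simp
  also have "?t ` y = {Base d, Base b}" using a(1) b d by (auto simp: y_def lift_Base swapf_def L2_def)
  finally have "Base a \<in> {Base d, Base b}" using xs(2) y_def by blast
  then show False using b(2) d(2) by (auto simp: L2_def)
qed


lemma lift_cyc_G: "a \<in> A0 \<Longrightarrow> b \<in> A0 \<Longrightarrow> c \<in> A0 \<Longrightarrow> a \<noteq> b \<Longrightarrow> b \<noteq> c \<Longrightarrow> a \<noteq> c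
  \<Longrightarrow> liftH A0 (cyc a b c) eps0 \<in> Gperm A0"
  by (rule liftH_Gperm[OF cyc_ok(1) cyc_ok(2)])

lemma no_bij3: assumes "infinite A0" "bij_betw f (two_sets A0) (fin_sets A0)"
  "sym_map A0 (two_sets A0) (\<lambda>\<pi>. image \<pi>) (\<lambda>\<pi>. image \<pi>) f"
  shows False
proof -
  obtain E where E: "finite E" "E \<subseteq> Atoms A0"
    "\<forall>\<pi>\<in>Gperm A0. (\<forall>a\<in>E. \<pi> a = a) \<longrightarrow> (\<forall>x\<in>two_sets A0. f (\<pi> ` x) = \<pi> ` (f x))"
    using assms(3) unfolding sym_map_def by blast
  define L where "L = (\<Union>z\<in>E. leaves z)"
  have fL: "finite L" using E(1) finite_leaves L_def by blast
  obtain a where a: "a \<in> A0" "a \<notin> L" using fresh[OF assms(1) fL] by blast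
  obtain b where b: "b \<in> A0" "b \<notin> insert a L" using fresh[OF assms(1)] fL by (meson finite_insert)
  obtain c where c: "c \<in> A0" "c \<notin> insert a (insert b L)" using fresh[OF assms(1)] fL by (meson finite_insert)
  have ab: "a \<noteq> b" "b \<noteq> c" "a \<noteq> c" using b(2) c(2) by auto
  define x where "x = {Base a, Base b, Base c}"
  have x2: "x \<in> fin_sets A0" using a b c by (auto simp: x_def fin_sets_def Base_Atoms)
  have inj: "inj_on f (two_sets A0)" using assms(2) by (rule bij_betw_imp_inj_on)
  have "x \<in> f ` two_sets A0" using bij_betw_imp_surj_on[OF assms(2)] x2 by simp
  then obtain y where y: "y \<in> two_sets A0" "f y = x" by (rule imageE) simp
  have yA: "y \<subseteq> Atoms A0" and yc: "card y = 2" using y(1) by (simp_all add: two_sets_def)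
  have imG: "\<pi> ` y \<in> two_sets A0" if "\<pi> \<in> Gperm A0" for \<pi>
  proof -
    have "inj_on \<pi> y" using Gperm_inj[OF that] yA by (rule inj_on_subset)
    then have "card (\<pi> ` y) = 2" using yc by (simp add: card_image)
    moreover have "\<pi> ` y \<subseteq> Atoms A0" using yA Gperm_Atoms[OF that] by auto
    ultimately show ?thesis by (simp add: two_sets_def)
  qed
  let ?s = "liftH A0 (cyc a b c) eps0"
  have sG: "?s \<in> Gperm A0" by (rule lift_cyc_G[OF a(1) b(1) c(1) ab])
  have sE: "\<forall>z\<in>E. ?s z = z"
    by (rule lift_fixE[OF E(2)]) (use a(2) b(2) c(2) in \<open>auto simp: L_def cyc_def\<close>)
  have "?s (Base a) = Base b" by (simp add: lift_Base[OF a(1)] cyc_def)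
  moreover have "?s (Base b) = Base c" using ab by (simp add: lift_Base[OF b(1)] cyc_def)
  moreover have "?s (Base c) = Base a" using ab by (simp add: lift_Base[OF c(1)] cyc_def)
  ultimately have "?s ` x = x" by (auto simp: x_def)
  moreover have "\<forall>w\<in>two_sets A0. f (?s ` w) = ?s ` f w" using E(3) sG sE by blast
  then have "f (?s ` y) = ?s ` f y" using y(1) by blast
  ultimately have "f (?s ` y) = f y" using y(2) by simp
  then have sy: "?s ` y = y" by (rule inj_onD[OF inj _ imG[OF sG] y(1)])
  obtain u v where uv: "y = {u, v}" "u \<noteq> v" using yc by (meson card_2_iff)
  have sinj: "inj_on ?s (Atoms A0)" by (rule Gperm_inj[OF sG])
  have uA: "u \<in> Atoms A0" and vA: "v \<in> Atoms A0" using yA uv(1) by auto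
  have fixw: "?s w = w" if w: "w \<in> y" for w
  proof (rule ccontr)
    assume nw: "?s w \<noteq> w"
    have wA: "w \<in> Atoms A0" using yA w by blast
    obtain w' where w': "y = {w, w'}" "w \<noteq> w'" using uv w by auto
    have "?s w \<in> y" using sy w by blast
    then have sw: "?s w = w'" using nw w' by auto
    have w'A: "w' \<in> Atoms A0" using yA w' by blast
    have "?s w' \<in> y" using sy w' by blast
    moreover have "?s w' \<noteq> w'"
    proof
      assume "?s w' = w'"
      then have "?s w' = ?s w" using sw by simp
      then show False using inj_onD[OF sinj _ w'A wA] w'(2) by blast
    qed
    ultimately have sw': "?s w' = w" using w' by auto
    have "gen (cyc a b c) eps0 (gen (cyc a b c) eps0 w) = w"
      using sw sw' wA w'A by (simp add: liftH_on)
    then have gg: "gen (\<lambda>t. cyc a b c (cyc a b c t)) eps0 w = w" by (simp add: gen_comp)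
    have "\<exists>t\<in>leaves w. cyc a b c t \<noteq> t"
    proof (rule ccontr)
      assume "\<not> (\<exists>t\<in>leaves w. cyc a b c t \<noteq> t)"
      then have "?s w = w" using lift_fix[OF wA] by blast
      then show False using nw by simp
    qed
    then obtain t where t: "t \<in> leaves w" "cyc a b c t \<noteq> t" by blast
    have "cyc a b c (cyc a b c t) = t"
      using gen_leaf[OF gg, of t] t(1) by (simp add: leaves_def)
    then show False using t(2) ab by (auto simp: cyc_def split: if_splits)
  qed
  have noa: "a \<notin> leaves w" if "w \<in> y" for w
  proof
    assume al: "a \<in> leaves w"
    have wA: "w \<in> Atoms A0" using yA that by blast
    have "cyc a b c a = a" by (rule lift_leaf[OF wA fixw[OF that] al])
    then show False using ab by (simp add: cyc_def)
  qed
  define L2 where "L2 = insert a (insert b (insert c (L \<union> leaves u \<union> leaves v)))"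
  have fL2: "finite L2" using fL by (simp add: L2_def finite_leaves)
  obtain d where d: "d \<in> A0" "d \<notin> L2" using fresh[OF assms(1) fL2] by blast
  let ?t = "liftH A0 (swapf a d) eps0"
  have tG: "?t \<in> Gperm A0" by (rule lift_swap_G[OF a(1) d(1)])
  have tE: "\<forall>z\<in>E. ?t z = z"
    by (rule lift_fixE[OF E(2)]) (use a(2) d(2) in \<open>auto simp: L_def L2_def swapf_def\<close>)
  have tw: "?t w = w" if w: "w \<in> y" for w
  proof (rule lift_fix)
    show "w \<in> Atoms A0" using yA w by blast
    have "w = u \<or> w = v" using w uv(1) by blast
    then have "d \<notin> leaves w" using d(2) by (auto simp: L2_def)
    then show "\<forall>t\<in>leaves w. swapf a d t = t" using noa[OF w] by (auto simp: swapf_def)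
  qed
  have "?t ` y = y" using tw by (simp add: image_cong)
  moreover have "\<forall>w\<in>two_sets A0. f (?t ` w) = ?t ` f w" using E(3) tG tE by blast
  then have "f (?t ` y) = ?t ` f y" using y(1) by blast
  ultimately have "x = ?t ` x" using y(2) by simp
  also have "?t ` x = {Base d, Base b, Base c}"
    using a(1) b c d ab by (auto simp: x_def lift_Base swapf_def L2_def)
  finally have xe: "x = {Base d, Base b, Base c}" .
  have "Base a \<in> x" by (simp add: x_def)
  then have "Base a \<in> {Base d, Base b, Base c}" using xe by blast
  then show False using ab d(2) by (auto simp: L2_def)
qed


primrec lev :: "'a atom \<Rightarrow> nat" where
  "lev (Base a) = 0"
| "lev (New m p e) = m"

lemma lev_Alev: assumes "w \<in> Atoms A0" shows "w \<in> Alev A0 (lev w)"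
proof (cases w)
  case (Base x) then show ?thesis using assms by (simp add: Base_Atoms)
next
  case (New m p e)
  have "New m p e \<in> Atoms A0" using assms New by simp
  then obtain k where k: "m = Suc k" "set p \<subseteq> Alev A0 k" "length p \<le> Suc k"
    unfolding New_Atoms by blast
  show ?thesis unfolding New lev.simps New_Alev using k by blast
qed

lemma lev_Gperm: assumes "\<pi> \<in> Gperm A0" "w \<in> Atoms A0" shows "lev (\<pi> w) = lev w"
proof (cases w)
  case (Base x)
  then have "x \<in> A0" using assms(2) by (simp add: Base_Atoms)
  then obtain y where "\<pi> (Base x) = Base y" using Gperm_Base[OF assms(1)] by blast
  then show ?thesis using Base by simp
next
  case (New m p e)
  then obtain b where "\<pi> (New m p e) = New m (map \<pi> p) (b \<noteq> e)"
    using Gperm_New[OF assms(1)] assms(2) by blast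
  then show ?thesis using New by simp
qed

definition NN :: "'a atom list \<Rightarrow> nat" where
  "NN xs = length xs + sum_list (map lev xs)"

definition f2 :: "'a atom list \<Rightarrow> 'a atom set" where
  "f2 xs = {New (Suc (NN xs)) xs False, New (Suc (NN xs)) xs True}"

lemma NN_Alev: assumes "set xs \<subseteq> Atoms A0" shows "set xs \<subseteq> Alev A0 (NN xs)"
proof
  fix w assume w: "w \<in> set xs"
  have "lev w \<le> sum_list (map lev xs)" using w by (simp add: member_le_sum_list)
  then have "lev w \<le> NN xs" by (simp add: NN_def)
  moreover have "w \<in> Alev A0 (lev w)" using lev_Alev assms w by blast
  ultimately show "w \<in> Alev A0 (NN xs)" using Alev_mono by blast
qed

lemma f2_Atoms: assumes "set xs \<subseteq> Atoms A0" shows "New (Suc (NN xs)) xs e \<in> Atoms A0"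
  unfolding New_Atoms using NN_Alev[OF assms] by (auto simp: NN_def)

lemma NN_Gperm: assumes "\<pi> \<in> Gperm A0" "set xs \<subseteq> Atoms A0" shows "NN (map \<pi> xs) = NN xs"
proof -
  have h: "map lev (map \<pi> xs) = map lev xs" unfolding map_map
  proof (rule map_cong[OF refl])
    fix x assume "x \<in> set xs"
    then show "(lev \<circ> \<pi>) x = lev x" using lev_Gperm[OF assms(1)] assms(2) by auto
  qed
  show ?thesis by (simp only: NN_def length_map h)
qed

lemma f2_equiv: assumes "\<pi> \<in> Gperm A0" "set xs \<subseteq> Atoms A0" shows "f2 (map \<pi> xs) = \<pi> ` f2 xs"
proof -
  obtain b where b: "\<And>e'. \<pi> (New (Suc (NN xs)) xs e') = New (Suc (NN xs)) (map \<pi> xs) (b \<noteq> e')"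
    using Gperm_New[OF assms(1) f2_Atoms[OF assms(2)]] by blast
  have "\<pi> ` f2 xs = {New (Suc (NN xs)) (map \<pi> xs) b, New (Suc (NN xs)) (map \<pi> xs) (\<not> b)}"
    unfolding f2_def using b by simp
  also have "... = {New (Suc (NN xs)) (map \<pi> xs) False, New (Suc (NN xs)) (map \<pi> xs) True}"
    by (cases b) auto
  finally show ?thesis unfolding f2_def NN_Gperm[OF assms] by simp
qed

lemma f2_inj: "inj_on f2 S"
proof (rule inj_onI)
  fix xs ys assume e: "f2 xs = f2 ys"
  have "New (Suc (NN xs)) xs False \<in> f2 xs" unfolding f2_def by blast
  then have "New (Suc (NN xs)) xs False \<in> {New (Suc (NN ys)) ys False, New (Suc (NN ys)) ys True}"
    using e unfolding f2_def by simp
  then show "xs = ys" by (simp only: insert_iff empty_iff atom.inject) blast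
qed

lemma f2_two: assumes "set xs \<subseteq> Atoms A0" shows "f2 xs \<in> two_sets A0"
  using f2_Atoms[OF assms] by (simp add: f2_def two_sets_def)

theorem mainTheorem9:
  fixes A0 :: "'a set"
  assumes "infinite A0"
  shows "V_less A0 (Atoms A0 \<times> Atoms A0) (\<lambda>\<pi>. map_prod \<pi> \<pi>) (inj_seqs A0) (\<lambda>\<pi>. map \<pi>)
       \<and> V_less A0 (inj_seqs A0) (\<lambda>\<pi>. map \<pi>) (two_sets A0) (\<lambda>\<pi>. image \<pi>)
       \<and> V_less A0 (two_sets A0) (\<lambda>\<pi>. image \<pi>) (fin_sets A0) (\<lambda>\<pi>. image \<pi>)"
proof (intro conjI)
  show "V_less A0 (Atoms A0 \<times> Atoms A0) (\<lambda>\<pi>. map_prod \<pi> \<pi>) (inj_seqs A0) (\<lambda>\<pi>. map \<pi>)"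
    unfolding V_less_def
  proof (intro conjI)
    have "inj_on g1 (Atoms A0 \<times> Atoms A0)" by (rule g1_inj)
    moreover have "g1 ` (Atoms A0 \<times> Atoms A0) \<subseteq> inj_seqs A0"
      by (auto simp: inj_seqs_def g1_set g1_distinct)
    moreover have "sym_map A0 (Atoms A0 \<times> Atoms A0) (\<lambda>\<pi>. map_prod \<pi> \<pi>) (\<lambda>\<pi>. map \<pi>) g1"
      unfolding sym_map_def
    proof (intro exI[of _ "{}"] conjI ballI impI)
      fix \<pi> x assume \<pi>: "\<pi> \<in> Gperm A0" and x: "x \<in> Atoms A0 \<times> Atoms A0"
      have i: "inj_on \<pi> (Atoms A0)" by (rule Gperm_inj[OF \<pi>])
      obtain u v where uv: "x = (u, v)" "u \<in> Atoms A0" "v \<in> Atoms A0" using x by auto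
      have "(\<pi> u = \<pi> v) = (u = v)" using inj_on_eq_iff[OF i uv(2,3)] .
      then show "g1 (map_prod \<pi> \<pi> x) = map \<pi> (g1 x)" using uv(1) by (simp add: g1_def)
    qed auto
    ultimately show "\<exists>f. inj_on f (Atoms A0 \<times> Atoms A0) \<and> f ` (Atoms A0 \<times> Atoms A0) \<subseteq> inj_seqs A0 \<and>
      sym_map A0 (Atoms A0 \<times> Atoms A0) (\<lambda>\<pi>. map_prod \<pi> \<pi>) (\<lambda>\<pi>. map \<pi>) f" by blast
    show "\<not> (\<exists>f. bij_betw f (Atoms A0 \<times> Atoms A0) (inj_seqs A0) \<and>
      sym_map A0 (Atoms A0 \<times> Atoms A0) (\<lambda>\<pi>. map_prod \<pi> \<pi>) (\<lambda>\<pi>. map \<pi>) f)"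
      using no_bij1[OF assms] by blast
  qed
  show "V_less A0 (inj_seqs A0) (\<lambda>\<pi>. map \<pi>) (two_sets A0) (\<lambda>\<pi>. image \<pi>)"
    unfolding V_less_def
  proof (intro conjI)
    have "inj_on f2 (inj_seqs A0)" by (rule f2_inj)
    moreover have "f2 ` (inj_seqs A0) \<subseteq> two_sets A0"
      using f2_two by (auto simp: inj_seqs_def)
    moreover have "sym_map A0 (inj_seqs A0) (\<lambda>\<pi>. map \<pi>) (\<lambda>\<pi>. image \<pi>) f2"
      unfolding sym_map_def
    proof (intro exI[of _ "{}"] conjI ballI impI)
      fix \<pi> xs assume \<pi>: "\<pi> \<in> Gperm A0" and xs: "xs \<in> inj_seqs A0"
      show "f2 (map \<pi> xs) = \<pi> ` (f2 xs)" using f2_equiv[OF \<pi>] xs by (simp add: inj_seqs_def)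
    qed auto
    ultimately show "\<exists>f. inj_on f (inj_seqs A0) \<and> f ` (inj_seqs A0) \<subseteq> two_sets A0 \<and>
      sym_map A0 (inj_seqs A0) (\<lambda>\<pi>. map \<pi>) (\<lambda>\<pi>. image \<pi>) f" by blast
    show "\<not> (\<exists>f. bij_betw f (inj_seqs A0) (two_sets A0) \<and>
      sym_map A0 (inj_seqs A0) (\<lambda>\<pi>. map \<pi>) (\<lambda>\<pi>. image \<pi>) f)"
      using no_bij2[OF assms] by blast
  qed
  show "V_less A0 (two_sets A0) (\<lambda>\<pi>. image \<pi>) (fin_sets A0) (\<lambda>\<pi>. image \<pi>)"
    unfolding V_less_def
  proof (intro conjI)
    have "inj_on id (two_sets A0)" by simp
    moreover have "id ` (two_sets A0) \<subseteq> fin_sets A0"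
      by (auto simp: two_sets_def fin_sets_def card_ge_0_finite)
    moreover have "sym_map A0 (two_sets A0) (\<lambda>\<pi>. image \<pi>) (\<lambda>\<pi>. image \<pi>) id"
      unfolding sym_map_def by (intro exI[of _ "{}"]) simp
    ultimately show "\<exists>f. inj_on f (two_sets A0) \<and> f ` (two_sets A0) \<subseteq> fin_sets A0 \<and>
      sym_map A0 (two_sets A0) (\<lambda>\<pi>. image \<pi>) (\<lambda>\<pi>. image \<pi>) f" by blast
    show "\<not> (\<exists>f. bij_betw f (two_sets A0) (fin_sets A0) \<and>
      sym_map A0 (two_sets A0) (\<lambda>\<pi>. image \<pi>) (\<lambda>\<pi>. image \<pi>) f)"
      using no_bij3[OF assms] by blast
  qed
qed

end
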